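(* Assume (F1)–(F3) and let $\tau\ge0$, $c\in\mathbb R$. Let $w\in C^2(\mathbb R)$ be a monotonically decreasing solution of $w''(x)+cw'(x)+w(x)\big(1-w(x)-f(w(x+c\tau))\big)=0$ on $\mathbb R$. If $w(-\infty)=w_0$ and $w(+\infty)=0$, then $c<0$. If $w(-\infty)=1$ and $w(+\infty)=w_0$, then $c>0$.
   Context: $f:\mathbb R\to\mathbb R$ is $C^4$ with bounded derivatives and satisfies: (F1) $f(w)>0$ for $0\le w<1$, $f(1)=0$, $f'(1)>-1$; (F2) $f(0)>1$, $f'(0)>0$, and $f(w)>1$ for $0\le w<w_*$ for some $w_*\in(0,1)$; (F3) the equation $f(w)=1-w$ has exactly one solution $w_0$ in $(0,1)$, and $f'(w_0)<-1$; hence $f(w)>1-w$ for $0\le w<w_0$ and $f(w)<1-w$ for $w_0<w<1$. *)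

theory Defs
  imports "HOL-Analysis.Analysis"
begin

definition C4_bounded_derivs :: "(real \<Rightarrow> real) \<Rightarrow> bool" where
  "C4_bounded_derivs f \<longleftrightarrow>
     (\<forall>k<4. \<forall>x. ((deriv ^^ k) f has_real_derivative (deriv ^^ Suc k) f x) (at x))
   \<and> continuous_on UNIV ((deriv ^^ 4) f)
   \<and> (\<forall>k\<in>{1..4}. bounded (range ((deriv ^^ k) f)))"

definition hypF :: "(real \<Rightarrow> real) \<Rightarrow> real \<Rightarrow> bool" where
  "hypF f w0 \<longleftrightarrow>
     C4_bounded_derivs f
   \<and> (\<forall>w. 0 \<le> w \<and> w < 1 \<longrightarrow> f w > 0) \<and> f 1 = 0 \<and> deriv f 1 > -1
   \<and> f 0 > 1 \<and> deriv f 0 > 0 \<and> (\<exists>ws. 0 < ws \<and> ws < 1 \<and> (\<forall>w. 0 \<le> w \<and> w < ws \<longrightarrow> f w > 1))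
   \<and> 0 < w0 \<and> w0 < 1 \<and> f w0 = 1 - w0
   \<and> (\<forall>w. 0 < w \<and> w < 1 \<and> f w = 1 - w \<longrightarrow> w = w0)
   \<and> deriv f w0 < -1"

end

theory Submission
  imports Defs
begin

lemma key1:
  fixes w :: "real \<Rightarrow> real" and c M :: real
  assumes w1: "\<And>x. (w has_real_derivative deriv w x) (at x)"
    and w2: "\<And>x. (deriv w has_real_derivative deriv (deriv w) x) (at x)"
    and mono: "antimono w"
    and sg: "\<And>x. deriv (deriv w) x + c * deriv w x \<ge> 0"
    and c: "c \<ge> 0" and bd: "\<And>x. w x \<le> M" and nc: "w p \<noteq> w q"
  shows False
proof -
  have "\<exists>x0. deriv w x0 < 0"
  proof (rule ccontr)
    assume "\<not> ?thesis"
    hence nn: "\<And>x. deriv w x \<ge> 0" by (simp add: not_less)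
    have "w x = w y" if "x \<le> y" for x y
    proof -
      have "w x \<le> w y"
        by (rule DERIV_nonneg_imp_nondecreasing[OF that]) (use w1 nn in blast)
      moreover have "w y \<le> w x" using mono that by (simp add: antimono_def)
      ultimately show ?thesis by simp
    qed
    hence "w p = w q" by (metis linear)
    with nc show False by simp
  qed
  then obtain x0 where x0: "deriv w x0 < 0" by blast
  define a where "a = deriv w x0"
  have gd: "((\<lambda>x. exp (c*x) * deriv w x) has_real_derivative
       (exp (c*x) * (deriv (deriv w) x + c * deriv w x))) (at x)" for x
    by (auto intro!: derivative_eq_intros w2 simp: algebra_simps)
  have wd: "deriv w x \<le> a" if "x \<le> x0" for x
  proof -
    have "exp (c*x) * deriv w x \<le> exp (c*x0) * deriv w x0"
      apply (rule DERIV_nonneg_imp_nondecreasing[OF that])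
      using gd sg by (meson exp_ge_zero mult_nonneg_nonneg exp_gt_zero less_imp_le)
    hence "deriv w x \<le> exp (c*x0 - c*x) * deriv w x0"
      by (simp add: exp_diff field_simps)
    also have "\<dots> \<le> deriv w x0"
    proof -
      have "exp (c*x0 - c*x) \<ge> 1" using c that
        by (simp add: mult_left_mono)
      thus ?thesis using x0 by (simp add: mult_le_cancel_right2)
    qed
    finally show ?thesis by (simp add: a_def)
  qed
  define x where "x = x0 + (M + 1 - w x0) / a"
  have "M + 1 - w x0 > 0" using bd[of x0] by simp
  hence xle: "x \<le> x0" using x0 unfolding x_def a_def
    by (simp add: divide_pos_neg less_imp_le)
  have "w x - a * x \<ge> w x0 - a * x0"
    apply (rule DERIV_nonpos_imp_nonincreasing[OF xle])
    apply (rule exI[of _ "deriv w _ - a"])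
    using wd by (auto intro!: derivative_eq_intros w1)
  hence "w x \<ge> w x0 + a * (x - x0)" by (simp add: algebra_simps)
  also have "a * (x - x0) = M + 1 - w x0" unfolding x_def using x0 a_def by simp
  finally show False using bd[of x] by simp
qed

lemma key2:
  fixes w :: "real \<Rightarrow> real" and c M :: real
  assumes w1: "\<And>x. (w has_real_derivative deriv w x) (at x)"
    and w2: "\<And>x. (deriv w has_real_derivative deriv (deriv w) x) (at x)"
    and mono: "antimono w"
    and sg: "\<And>x. deriv (deriv w) x + c * deriv w x \<le> 0"
    and c: "c \<le> 0" and bd: "\<And>x. w x \<ge> M" and nc: "w p \<noteq> w q"
  shows False
proof -
  have "\<exists>x0. deriv w x0 < 0"
  proof (rule ccontr)
    assume "\<not> ?thesis"
    hence nn: "\<And>x. deriv w x \<ge> 0" by (simp add: not_less)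
    have "w x = w y" if "x \<le> y" for x y
    proof -
      have "w x \<le> w y"
        by (rule DERIV_nonneg_imp_nondecreasing[OF that]) (use w1 nn in blast)
      moreover have "w y \<le> w x" using mono that by (simp add: antimono_def)
      ultimately show ?thesis by simp
    qed
    hence "w p = w q" by (metis linear)
    with nc show False by simp
  qed
  then obtain x0 where x0: "deriv w x0 < 0" by blast
  define a where "a = deriv w x0"
  have gd: "((\<lambda>x. exp (c*x) * deriv w x) has_real_derivative
       (exp (c*x) * (deriv (deriv w) x + c * deriv w x))) (at x)" for x
    by (auto intro!: derivative_eq_intros w2 simp: algebra_simps)
  have wd: "deriv w x \<le> a" if "x0 \<le> x" for x
  proof -
    have "exp (c*x) * deriv w x \<le> exp (c*x0) * deriv w x0"
      apply (rule DERIV_nonpos_imp_nonincreasing[OF that])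
      using gd sg by (meson exp_ge_zero mult_nonneg_nonpos)
    hence "deriv w x \<le> exp (c*x0 - c*x) * deriv w x0"
      by (simp add: exp_diff field_simps)
    also have "\<dots> \<le> deriv w x0"
    proof -
      have "c * x \<le> c * x0" using c that by (simp add: mult_left_mono_neg)
      hence "exp (c*x0 - c*x) \<ge> 1" by simp
      thus ?thesis using x0 by (simp add: mult_le_cancel_right2)
    qed
    finally show ?thesis by (simp add: a_def)
  qed
  define x where "x = x0 + (M - 1 - w x0) / a"
  have "M - 1 - w x0 < 0" using bd[of x0] by simp
  hence xle: "x0 \<le> x" using x0 unfolding x_def a_def
    by (simp add: divide_neg_neg less_imp_le)
  have "w x - a * x \<le> w x0 - a * x0"
    apply (rule DERIV_nonpos_imp_nonincreasing[OF xle])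
    apply (rule exI[of _ "deriv w _ - a"])
    using wd by (auto intro!: derivative_eq_intros w1)
  hence "w x \<le> w x0 + a * (x - x0)" by (simp add: algebra_simps)
  also have "a * (x - x0) = M - 1 - w x0" unfolding x_def using x0 a_def by simp
  finally show False using bd[of x] by simp
qed

theorem lemma4p3:
  fixes f w :: "real \<Rightarrow> real" and w0 \<tau> c :: real
  assumes hF: "hypF f w0"
    and tau: "\<tau> \<ge> 0"
    and w1: "\<And>x. (w has_real_derivative deriv w x) (at x)"
    and w2: "\<And>x. (deriv w has_real_derivative deriv (deriv w) x) (at x)"
    and w2c: "continuous_on UNIV (deriv (deriv w))"
    and mono: "antimono w"
    and eq: "\<And>x. deriv (deriv w) x + c * deriv w x
                  + w x * (1 - w x - f (w (x + c * \<tau>))) = 0"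
  shows "((w \<longlongrightarrow> w0) at_bot \<and> (w \<longlongrightarrow> 0) at_top \<longrightarrow> c < 0)
       \<and> ((w \<longlongrightarrow> 1) at_bot \<and> (w \<longlongrightarrow> w0) at_top \<longrightarrow> c > 0)"
proof -
  have C4: "C4_bounded_derivs f" using hF by (simp add: hypF_def)
  have fd: "\<And>x. (f has_real_derivative deriv f x) (at x)"
    proof -
    fix x
    have "((deriv ^^ 0) f has_real_derivative (deriv ^^ Suc 0) f x) (at x)"
      using C4 unfolding C4_bounded_derivs_def by (metis zero_less_numeral)
    thus "(f has_real_derivative deriv f x) (at x)" by simp
  qed
  have fc: "continuous_on S f" for S
    using fd by (meson DERIV_isCont continuous_at_imp_continuous_on)
  have f0: "f 0 > 1" and f1: "f 1 = 0" and fd1: "deriv f 1 > -1" and w0p: "0 < w0" "w0 < 1"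
    and fw0: "f w0 = 1 - w0" and uq: "\<And>u. 0 < u \<Longrightarrow> u < 1 \<Longrightarrow> f u = 1 - u \<Longrightarrow> u = w0"
    using hF by (auto simp: hypF_def)
  have fgt: "f v > 1 - v" if "0 \<le> v" "v < w0" for v
  proof (rule ccontr)
    assume "\<not> ?thesis"
    hence "(\<lambda>u. (1 - u) - f u) 0 \<le> 0" "0 \<le> (\<lambda>u. (1 - u) - f u) v" using f0 by auto
    moreover have "continuous_on {0..v} (\<lambda>u. (1 - u) - f u)"
      using fc by (auto intro!: continuous_intros)
    ultimately obtain u where u: "0 \<le> u" "u \<le> v" "1 - u - f u = 0"
      using IVT'[of "\<lambda>u. (1 - u) - f u" 0 0 v] \<open>0 \<le> v\<close> by (metis (no_types, lifting))
    have "u \<noteq> 0" using u f0 by auto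
    hence "u = w0" using uq[of u] u that w0p by auto
    thus False using u that by simp
  qed
  have flt: "f v < 1 - v" if "w0 < v" "v < 1" for v
  proof (rule ccontr)
    assume "\<not> ?thesis"
    hence hv: "0 \<le> (\<lambda>u. f u + u - 1) v" by simp
    have "((\<lambda>u. f u + u - 1) has_real_derivative deriv f 1 + 1) (at 1)"
      by (auto intro!: derivative_eq_intros fd)
    from DERIV_pos_inc_left[OF this] fd1 obtain d where d: "d > 0"
      "\<And>h. h > 0 \<Longrightarrow> h < d \<Longrightarrow> f (1 - h) + (1 - h) - 1 < f 1 + 1 - 1" by auto
    define t where "t = min (d/2) ((1-v)/2)"
    have t: "t > 0" "t < d" "t < 1 - v" using d that unfolding t_def by (auto simp: min_def)
    have hu: "(\<lambda>u. f u + u - 1) (1 - t) \<le> 0" using d(2)[OF t(1,2)] f1 by simp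
    have "\<forall>x. v \<le> x \<and> x \<le> 1-t \<longrightarrow> isCont (\<lambda>u. f u + u - 1) x"
      using fc[of UNIV] by (auto intro!: continuous_intros simp: continuous_on_eq_continuous_at)
    with IVT2[of "\<lambda>u. f u + u - 1" "1-t" 0 v] hu hv obtain u where u: "v \<le> u" "u \<le> 1 - t" "f u + u - 1 = 0"
      using t by auto
    hence "u = w0" using uq[of u] that w0p t by auto
    thus False using u that by simp
  qed
  have nonconst: "\<exists>p q. w p \<noteq> w q" if "(w \<longlongrightarrow> a) at_bot" "(w \<longlongrightarrow> b) at_top" "a \<noteq> b" for a b
  proof (rule ccontr)
    assume "\<not> ?thesis"
    hence "w = (\<lambda>_. w 0)" by auto
    with that show False by (metis tendsto_const_iff trivial_limit_at_bot_linorder trivial_limit_at_top_linorder)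
  qed
  have ub: "w x \<le> a" if "(w \<longlongrightarrow> a) at_bot" for x a
    by (rule tendsto_lowerbound[OF that]) (use mono in \<open>auto simp: antimono_def eventually_at_bot_linorder\<close>)
  have lb: "w x \<ge> a" if "(w \<longlongrightarrow> a) at_top" for x a
    by (rule tendsto_upperbound[OF that]) (use mono in \<open>auto simp: antimono_def eventually_at_top_linorder\<close>)
  show ?thesis
  proof (intro conjI impI)
    assume L: "(w \<longlongrightarrow> w0) at_bot \<and> (w \<longlongrightarrow> 0) at_top"
    show "c < 0"
    proof (rule ccontr)
      assume "\<not> c < 0" hence c: "c \<ge> 0" by simp
      have sg: "deriv (deriv w) x + c * deriv w x \<ge> 0" for x
      proof -
        define v where "v = w (x + c * \<tau>)"
        have "v \<le> w x" using mono c tau unfolding v_def antimono_def by simp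
        moreover have "0 \<le> v" "v \<le> w0" "0 \<le> w x" using L ub lb unfolding v_def by auto
        ultimately have "f v \<ge> 1 - v" using fgt fw0 by (cases "v < w0") force+
        hence "1 - w x - f v \<le> 0" using \<open>v \<le> w x\<close> by simp
        hence "w x * (1 - w x - f v) \<le> 0" using \<open>0 \<le> w x\<close> by (simp add: mult_nonneg_nonpos)
        thus ?thesis using eq[of x] unfolding v_def by linarith
      qed
      obtain p q where "w p \<noteq> w q" using nonconst L w0p by force
      from key1[OF w1 w2 mono sg c, of w0 p q] ub L this show False by blast
    qed
  next
    assume L: "(w \<longlongrightarrow> 1) at_bot \<and> (w \<longlongrightarrow> w0) at_top"
    show "c > 0"
    proof (rule ccontr)
      assume "\<not> c > 0" hence c: "c \<le> 0" by simp
      have sg: "deriv (deriv w) x + c * deriv w x \<le> 0" for x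
      proof -
        define v where "v = w (x + c * \<tau>)"
        have "c * \<tau> \<le> 0" using c tau by (simp add: mult_nonpos_nonneg)
        hence "v \<ge> w x" using mono unfolding v_def antimono_def by simp
        moreover have "w0 \<le> v" "v \<le> 1" "w0 \<le> w x" using L ub lb unfolding v_def by auto
        moreover have "f v \<le> 1 - v"
        proof (cases "v = w0 \<or> v = 1")
          case True thus ?thesis using fw0 f1 by auto
        next
          case False thus ?thesis using flt[of v] \<open>w0 \<le> v\<close> \<open>v \<le> 1\<close> by auto
        qed
        ultimately have "1 - w x - f v \<ge> 0" by simp
        hence "w x * (1 - w x - f v) \<ge> 0" using \<open>w0 \<le> w x\<close> w0p by simp
        thus ?thesis using eq[of x] unfolding v_def by linarith
      qed
      obtain p q where "w p \<noteq> w q" using nonconst L w0p by force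
      from key2[OF w1 w2 mono sg c, of w0 p q] lb L this show False by blast
    qed
  qed
qed

end
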